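(* Let $X$ be a fragment of $\mathrm{FO}(\lambda)$ that contains all sentences (i.e. $\mathrm{FO}_0(\lambda)\subseteq X$) and the formula $(x_1=x_2)$. Then every modeling $X$-limit of a sequence of weakly uniform $\lambda$-modelings is weakly uniform.
   Context: For a $\lambda$-structure $\mathbf A$ with domain $A$ and a first-order formula $\phi$ with free variables among $x_1,\dots,x_p$, $\Omega_\phi(\mathbf A)=\{(v_1,\dots,v_p)\in A^p:\mathbf A\models\phi(v_1,\dots,v_p)\}$. A relational sample space is a $\lambda$-structure whose domain is a standard Borel space in which every $\Omega_\phi(\mathbf A)$ is measurable in the product $\sigma$-algebra; a $\lambda$-modeling is a relational sample space with a probability measure $\nu_{\mathbf A}$, and $\langle\phi,\mathbf A\rangle=\nu_{\mathbf A}^p(\Omega_\phi(\mathbf A))$ (a finite structure is a modeling with the discrete $\sigma$-algebra and uniform measure). A sequence $(\mathbf A_n)$ of modelings is $X$-convergent if $\langle\phi,\mathbf A_n\rangle$ converges for each $\phi\in X$, and a modeling $\mathbf L$ is a modeling $X$-limit of it if $\langle\phi,\mathbf L\rangle=\lim_n\langle\phi,\mathbf A_n\rangle$ for all $\phi\in X$. A modeling is weakly uniform if all singletons of its domain have the same measure. *)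

theory Defs
  imports "HOL-Probability.Probability"
begin

text \<open>A relational signature lambda is given by a type 'r of relation symbols together
with an arity function. Variables are natural numbers; the paper's x_1, x_2, ... are
the variables 0, 1, ...\<close>

datatype 'r fo =
    Eq nat nat
  | Rel 'r "nat list"
  | Neg "'r fo"
  | Conj "'r fo" "'r fo"
  | Ex nat "'r fo"

fun fv :: "'r fo \<Rightarrow> nat set" where
  "fv (Eq i j) = {i, j}"
| "fv (Rel r xs) = set xs"
| "fv (Neg \<phi>) = fv \<phi>"
| "fv (Conj \<phi> \<psi>) = fv \<phi> \<union> fv \<psi>"
| "fv (Ex i \<phi>) = fv \<phi> - {i}"

fun wf_fo :: "('r \<Rightarrow> nat) \<Rightarrow> 'r fo \<Rightarrow> bool" where
  "wf_fo ar (Eq i j) = True"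
| "wf_fo ar (Rel r xs) = (length xs = ar r)"
| "wf_fo ar (Neg \<phi>) = wf_fo ar \<phi>"
| "wf_fo ar (Conj \<phi> \<psi>) = (wf_fo ar \<phi> \<and> wf_fo ar \<psi>)"
| "wf_fo ar (Ex i \<phi>) = wf_fo ar \<phi>"

definition FO :: "('r \<Rightarrow> nat) \<Rightarrow> 'r fo set" where
  "FO ar = {\<phi>. wf_fo ar \<phi>}"

definition FO0 :: "('r \<Rightarrow> nat) \<Rightarrow> 'r fo set" where
  "FO0 ar = {\<phi>. wf_fo ar \<phi> \<and> fv \<phi> = {}}"

fun sat :: "'a set \<Rightarrow> ('r \<Rightarrow> 'a list set) \<Rightarrow> (nat \<Rightarrow> 'a) \<Rightarrow> 'r fo \<Rightarrow> bool" where
  "sat D I v (Eq i j) = (v i = v j)"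
| "sat D I v (Rel r xs) = (map v xs \<in> I r)"
| "sat D I v (Neg \<phi>) = (\<not> sat D I v \<phi>)"
| "sat D I v (Conj \<phi> \<psi>) = (sat D I v \<phi> \<and> sat D I v \<psi>)"
| "sat D I v (Ex i \<phi>) = (\<exists>a\<in>D. sat D I (v(i := a)) \<phi>)"

definition is_structure :: "('r \<Rightarrow> nat) \<Rightarrow> 'a set \<Rightarrow> ('r \<Rightarrow> 'a list set) \<Rightarrow> bool" where
  "is_structure ar D I \<longleftrightarrow> D \<noteq> {} \<and> (\<forall>r. \<forall>xs\<in>I r. length xs = ar r \<and> set xs \<subseteq> D)"

definition Omega :: "'a set \<Rightarrow> ('r \<Rightarrow> 'a list set) \<Rightarrow> nat \<Rightarrow> 'r fo \<Rightarrow> (nat \<Rightarrow> 'a) set" where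
  "Omega D I p \<phi> = {v \<in> PiE {..<p} (\<lambda>_. D). sat D I v \<phi>}"

definition standard_borel :: "'a measure \<Rightarrow> bool" where
  "standard_borel M \<longleftrightarrow> (\<exists>T. completely_metrizable_space T \<and> separable_space T \<and>
      topspace T = space M \<and> sets M = sigma_sets (topspace T) {U. openin T U})"

definition relational_sample_space :: "('r \<Rightarrow> nat) \<Rightarrow> 'a measure \<Rightarrow> ('r \<Rightarrow> 'a list set) \<Rightarrow> bool" where
  "relational_sample_space ar M I \<longleftrightarrow> is_structure ar (space M) I \<and> standard_borel M \<and>
     (\<forall>\<phi> p. wf_fo ar \<phi> \<and> fv \<phi> \<subseteq> {..<p} \<longrightarrow>
        Omega (space M) I p \<phi> \<in> sets (PiM {..<p} (\<lambda>_. M)))"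

definition modeling :: "('r \<Rightarrow> nat) \<Rightarrow> 'a measure \<Rightarrow> ('r \<Rightarrow> 'a list set) \<Rightarrow> bool" where
  "modeling ar M I \<longleftrightarrow> relational_sample_space ar M I \<and> prob_space M"

text \<open>The number of variables used to evaluate phi: the least p with fv phi within {..<p}.
(For a probability measure the value does not depend on the choice of such p.)\<close>
definition nvars :: "'r fo \<Rightarrow> nat" where
  "nvars \<phi> = (LEAST p. fv \<phi> \<subseteq> {..<p})"

definition stone :: "'r fo \<Rightarrow> 'a measure \<Rightarrow> ('r \<Rightarrow> 'a list set) \<Rightarrow> real" where
  "stone \<phi> M I = measure (PiM {..<nvars \<phi>} (\<lambda>_. M)) (Omega (space M) I (nvars \<phi>) \<phi>)"

definition weakly_uniform :: "'a measure \<Rightarrow> bool" where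
  "weakly_uniform M \<longleftrightarrow> (\<forall>a\<in>space M. \<forall>b\<in>space M. measure M {a} = measure M {b})"

definition modeling_X_limit ::
  "('r \<Rightarrow> nat) \<Rightarrow> 'r fo set \<Rightarrow> (nat \<Rightarrow> 'a measure \<times> ('r \<Rightarrow> 'a list set)) \<Rightarrow>
   'b measure \<Rightarrow> ('r \<Rightarrow> 'b list set) \<Rightarrow> bool" where
  "modeling_X_limit ar X A L J \<longleftrightarrow>
     (\<forall>n. modeling ar (fst (A n)) (snd (A n))) \<and> modeling ar L J \<and>
     (\<forall>\<phi>\<in>X. (\<lambda>n. stone \<phi> (fst (A n)) (snd (A n))) \<longlonglongrightarrow> stone \<phi> L J)"

end

theory Submission
  imports Defs
begin

fun neqs :: "nat \<Rightarrow> nat \<Rightarrow> 'r fo" where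
  "neqs n 0 = Eq 0 0"
| "neqs n (Suc j) = Conj (neqs n j) (Neg (Eq n j))"

fun dst :: "nat \<Rightarrow> 'r fo" where
  "dst 0 = Eq 0 0"
| "dst (Suc n) = Conj (dst n) (neqs n n)"

fun cl :: "nat \<Rightarrow> 'r fo \<Rightarrow> 'r fo" where
  "cl 0 \<psi> = \<psi>"
| "cl (Suc n) \<psi> = cl n (Ex n \<psi>)"

definition AL :: "nat \<Rightarrow> 'r fo" where
  "AL m = cl (Suc m) (dst (Suc m))"

definition EXA :: "nat \<Rightarrow> 'r fo" where
  "EXA m = Conj (AL m) (Neg (AL (Suc m)))"

lemma sat_neqs: "sat D I v (neqs n m) \<longleftrightarrow> (\<forall>j<m. v n \<noteq> v j)"
  by (induction m) (auto simp: less_Suc_eq)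

lemma sat_dst: "sat D I v (dst n) \<longleftrightarrow> (\<forall>i<n. \<forall>j<i. v i \<noteq> v j)"
  by (induction n) (auto simp: less_Suc_eq sat_neqs)

lemma fv_neqs: "fv (neqs n m) \<subseteq> {0, n} \<union> {..<m}"
  by (induction m) auto

lemma fv_dst: "fv (dst (Suc n)) \<subseteq> {..<Suc n}"
proof (induction n)
  case 0 then show ?case by simp
next
  case (Suc n)
  have "fv (neqs (Suc n) (Suc n)) \<subseteq> {..<Suc (Suc n)}" using fv_neqs[of "Suc n" "Suc n"] by auto
  with Suc show ?case by auto
qed

lemma fv_cl: "fv (cl k \<psi>) = fv \<psi> - {..<k}"
  by (induction k arbitrary: \<psi>) (auto simp: lessThan_Suc)

lemma wf_neqs: "wf_fo ar (neqs n m)" by (induction m) auto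
lemma wf_dst: "wf_fo ar (dst n)" by (induction n) (simp_all add: wf_neqs[of ar])
lemma wf_cl: "wf_fo ar (cl k \<psi>) = wf_fo ar \<psi>" by (induction k arbitrary: \<psi>) auto

lemma sat_cl: "sat D I v (cl k \<psi>) \<longleftrightarrow>
   (\<exists>u. (\<forall>i<k. u i \<in> D) \<and> sat D I (\<lambda>i. if i < k then u i else v i) \<psi>)"
proof (induction k arbitrary: \<psi>)
  case 0 then show ?case by simp
next
  case (Suc n)
  have eq: "\<And>u a. (\<lambda>i. if i < n then u i else v i)(n := a) = (\<lambda>i. if i < Suc n then (u(n:=a)) i else v i)"
    by (auto simp: less_Suc_eq)
  show ?case
  proof
    assume "sat D I v (cl (Suc n) \<psi>)"
    then obtain u a where "\<forall>i<n. u i \<in> D" "a \<in> D" "sat D I ((\<lambda>i. if i < n then u i else v i)(n := a)) \<psi>"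
      using Suc by auto
    then show "\<exists>u. (\<forall>i<Suc n. u i \<in> D) \<and> sat D I (\<lambda>i. if i < Suc n then u i else v i) \<psi>"
      by (intro exI[of _ "u(n:=a)"]) (auto simp: eq less_Suc_eq)
  next
    assume "\<exists>u. (\<forall>i<Suc n. u i \<in> D) \<and> sat D I (\<lambda>i. if i < Suc n then u i else v i) \<psi>"
    then obtain u where u: "\<forall>i<Suc n. u i \<in> D" "sat D I (\<lambda>i. if i < Suc n then u i else v i) \<psi>" by blast
    have "(\<lambda>i. if i < Suc n then u i else v i) = (\<lambda>i. if i < n then u i else v i)(n := u n)"
      by (auto simp: less_Suc_eq)
    then have "sat D I ((\<lambda>i. if i < n then u i else v i)(n := u n)) \<psi>" using u by simp
    moreover have "u n \<in> D" "\<forall>i<n. u i \<in> D" using u by auto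
    ultimately show "sat D I v (cl (Suc n) \<psi>)" using Suc[of "Ex n \<psi>"] by auto
  qed
qed

definition atleast :: "'a set \<Rightarrow> nat \<Rightarrow> bool" where
  "atleast D k \<longleftrightarrow> (\<exists>u. u ` {..<k} \<subseteq> D \<and> inj_on u {..<k})"

lemma sat_AL: "sat D I v (AL m) \<longleftrightarrow> atleast D (Suc m)"
  unfolding AL_def sat_cl sat_dst atleast_def
proof (intro iffI; elim exE conjE)
  fix u assume u: "\<forall>i<Suc m. u i \<in> D" "\<forall>i<Suc m. \<forall>j<i. (if i < Suc m then u i else v i) \<noteq> (if j < Suc m then u j else v j)"
  have "inj_on u {..<Suc m}"
  proof (rule inj_onI)
    fix x y assume "x \<in> {..<Suc m}" "y \<in> {..<Suc m}" "u x = u y"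
    then have u2: "\<forall>i<Suc m. \<forall>j<i. u i \<noteq> u j" "x < Suc m" "y < Suc m" "u x = u y" using u(2) by auto
    show "x = y"
    proof (cases x y rule: linorder_cases)
      case less then show ?thesis using u2 by metis
    next
      case greater then show ?thesis using u2 by metis
    qed
  qed
  then show "\<exists>u'. u' ` {..<Suc m} \<subseteq> D \<and> inj_on u' {..<Suc m}" using u(1) by auto
next
  fix u assume "u ` {..<Suc m} \<subseteq> D" "inj_on u {..<Suc m}"
  then show "\<exists>u. (\<forall>i<Suc m. u i \<in> D) \<and> (\<forall>i<Suc m. \<forall>j<i. (if i < Suc m then u i else v i) \<noteq> (if j < Suc m then u j else v j))"
  proof (intro exI[of _ u] conjI allI impI)
    fix i j assume ij: "i < Suc m" "j < i"
    have "j < Suc m" using ij by simp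
    with ij \<open>inj_on u {..<Suc m}\<close> have "u i \<noteq> u j" unfolding inj_on_def by (metis lessThan_iff less_irrefl)
    with ij \<open>j < Suc m\<close> show "(if i < Suc m then u i else v i) \<noteq> (if j < Suc m then u j else v j)"
      by simp
  qed (auto)
qed

lemma fv_AL: "fv (AL m) = {}"
  unfolding AL_def fv_cl using fv_dst by auto

lemma fv_EXA: "fv (EXA m) = {}"
  unfolding EXA_def by (simp add: fv_AL)

lemma wf_AL: "wf_fo ar (AL m)" unfolding AL_def wf_cl by (rule wf_dst)
lemma wf_EXA: "wf_fo ar (EXA m)" unfolding EXA_def by (simp add: wf_AL)

lemma atleast_finite: assumes "finite D" shows "atleast D k \<longleftrightarrow> k \<le> card D"
proof
  assume "atleast D k"
  then obtain u where "u ` {..<k} \<subseteq> D" "inj_on u {..<k}" unfolding atleast_def by blast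
  then have "card (u ` {..<k}) = k" by (simp add: card_image)
  then show "k \<le> card D" using card_mono[OF assms \<open>u ` {..<k} \<subseteq> D\<close>] by simp
next
  assume "k \<le> card D"
  then obtain T where T: "T \<subseteq> D" "card T = k" "finite T" by (rule obtain_subset_with_card_n)
  then obtain h where "bij_betw h {0..<k} T" using ex_bij_betw_nat_finite by blast
  then show "atleast D k" unfolding atleast_def using T
    by (auto simp: bij_betw_def atLeast0LessThan)
qed

lemma atleast_infinite: assumes "infinite D" shows "atleast D k"
proof -
  obtain T where T: "finite T" "card T = k" "T \<subseteq> D" using infinite_arbitrarily_large[OF assms] by blast
  then obtain h where "bij_betw h {0..<k} T" using ex_bij_betw_nat_finite by blast
  then show ?thesis unfolding atleast_def using T
    by (auto simp: bij_betw_def atLeast0LessThan)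
qed

lemma nvars_sentence: "fv \<phi> = {} \<Longrightarrow> nvars \<phi> = 0"
  unfolding nvars_def by simp

lemma stone_sentence:
  assumes "fv \<phi> = {}"
  shows "stone \<phi> M I = (if sat (space M) I (\<lambda>_. undefined) \<phi> then 1 else 0)"
proof (cases "sat (space M) I (\<lambda>_. undefined) \<phi>")
  case True
  then have "{v \<in> PiE {..<0::nat} (\<lambda>_. space M). sat (space M) I v \<phi>} = {\<lambda>_. undefined}" by auto
  then show ?thesis using True unfolding stone_def nvars_sentence[OF assms] Omega_def
    by (simp add: PiM_empty)
next
  case False
  then have e: "{v \<in> PiE {..<0::nat} (\<lambda>_. space M). sat (space M) I v \<phi>} = {}" by auto
  show ?thesis using False unfolding stone_def nvars_sentence[OF assms] Omega_def e
    by simp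
qed

lemma modeling_singleton:
  assumes "modeling ar M I" "a \<in> space M"
  shows "{a} \<in> sets M"
proof -
  obtain T where T: "completely_metrizable_space T" "topspace T = space M"
      "sets M = sigma_sets (topspace T) {U. openin T U}"
    using assms(1) unfolding modeling_def relational_sample_space_def standard_borel_def by blast
  have "t1_space T" using T(1) by (simp add: completely_metrizable_imp_metrizable_space metrizable_imp_t1_space)
  then have "closedin T {a}" using assms(2) T(2) by (simp add: closedin_t1_singleton)
  then have "openin T (topspace T - {a})" by auto
  then have "topspace T - {a} \<in> sets M" using T(3) by auto
  then have "space M - (topspace T - {a}) \<in> sets M" by auto
  moreover have "space M - (topspace T - {a}) = {a}" using T(2) assms(2) by auto
  ultimately show ?thesis by simp
qed

lemma wu_eq: "weakly_uniform M \<Longrightarrow> x \<in> space M \<Longrightarrow> a \<in> space M \<Longrightarrow> measure M {x} = measure M {a}"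
  unfolding weakly_uniform_def by blast

lemma atoms_atleast:
  assumes "prob_space M" "\<And>x. x \<in> space M \<Longrightarrow> {x} \<in> sets M" "weakly_uniform M"
    "a \<in> space M" "atleast (space M) k"
  shows "real k * measure M {a} \<le> 1"
proof -
  interpret prob_space M by fact
  obtain u where u: "u ` {..<k} \<subseteq> space M" "inj_on u {..<k}" using assms(5) unfolding atleast_def by blast
  have "measure M (u ` {..<k}) = (\<Sum>x\<in>u ` {..<k}. measure M {x})"
    using u assms(2) by (intro measure_eq_sum_singleton) auto
  also have "\<dots> = (\<Sum>x\<in>u ` {..<k}. measure M {a})"
  proof (rule sum.cong[OF refl])
    fix x assume "x \<in> u ` {..<k}"
    then have "x \<in> space M" using u(1) by blast
    then show "measure M {x} = measure M {a}" by (rule wu_eq[OF assms(3) _ assms(4)])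
  qed
  also have "\<dots> = real k * measure M {a}"
    by (simp only: sum_constant card_image[OF u(2)] card_lessThan)
  finally have "measure M (u ` {..<k}) = real k * measure M {a}" .
  then show ?thesis using prob_le_1[of "u ` {..<k}"] by simp
qed

lemma atoms_exact:
  assumes "prob_space M" "\<And>x. x \<in> space M \<Longrightarrow> {x} \<in> sets M" "weakly_uniform M"
    "a \<in> space M" "finite (space M)"
  shows "real (card (space M)) * measure M {a} = 1"
proof -
  interpret prob_space M by fact
  have "1 = measure M (space M)" using prob_space by simp
  also have "\<dots> = (\<Sum>x\<in>space M. measure M {x})"
    using assms(2,5) by (intro measure_eq_sum_singleton) auto
  also have "\<dots> = (\<Sum>x\<in>space M. measure M {a})"
    by (rule sum.cong[OF refl], rule wu_eq[OF assms(3) _ assms(4)])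
  finally show ?thesis by simp
qed

lemma nvars_Eq: "nvars (Eq 0 1 :: 'r fo) = 2"
  unfolding nvars_def
proof (rule Least_equality)
  show "fv (Eq 0 1 :: 'r fo) \<subseteq> {..<2}" by auto
next
  fix y :: nat assume "fv (Eq 0 1 :: 'r fo) \<subseteq> {..<y}" then show "2 \<le> y" by auto
qed

lemma diag_sets:
  assumes "modeling ar M I"
  shows "Omega (space M) I 2 (Eq 0 1) \<in> sets (PiM {..<2} (\<lambda>_. M))"
  using assms unfolding modeling_def relational_sample_space_def by auto

lemma diag_ge:
  assumes "modeling ar M I" "a \<in> space M"
  shows "(measure M {a})^2 \<le> stone (Eq 0 1) M I"
proof -
  have P: "prob_space M" using assms(1) unfolding modeling_def by auto
  interpret product_sigma_finite "\<lambda>_::nat. M"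
    unfolding product_sigma_finite_def using P prob_space_imp_sigma_finite by auto
  interpret PP: prob_space "PiM {..<2::nat} (\<lambda>_. M)" by (rule prob_space_PiM) (use P in auto)
  have sa: "{a} \<in> sets M" by (rule modeling_singleton[OF assms])
  have "PiE {..<2::nat} (\<lambda>_. {a}) \<subseteq> Omega (space M) I 2 (Eq 0 1)"
    using assms(2) unfolding Omega_def by (auto simp: PiE_iff)
  then have "measure (PiM {..<2::nat} (\<lambda>_. M)) (PiE {..<2::nat} (\<lambda>_. {a})) \<le> stone (Eq 0 1) M I"
    unfolding stone_def nvars_Eq using diag_sets[OF assms(1)] by (intro PP.finite_measure_mono) auto
  moreover have "emeasure (PiM {..<2::nat} (\<lambda>_. M)) (PiE {..<2::nat} (\<lambda>_. {a})) = emeasure M {a} ^ 2"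
    using sa by (subst emeasure_PiM) (auto simp: numeral_2_eq_2 lessThan_Suc)
  then have "measure (PiM {..<2::nat} (\<lambda>_. M)) (PiE {..<2::nat} (\<lambda>_. {a})) = measure M {a} ^ 2"
    unfolding measure_def by (simp add: power2_eq_square enn2real_mult)
  ultimately show ?thesis by simp
qed

lemma diag_wu:
  assumes "modeling ar M I" "weakly_uniform M" "a \<in> space M"
  shows "stone (Eq 0 1) M I = measure M {a}"
proof -
  have P: "prob_space M" using assms(1) unfolding modeling_def by auto
  interpret M: prob_space M by fact
  interpret product_sigma_finite "\<lambda>_::nat. M"
    unfolding product_sigma_finite_def using P prob_space_imp_sigma_finite by auto
  interpret P0: prob_space "PiM {0::nat} (\<lambda>_. M)" by (rule prob_space_PiM) (use P in auto)
  define Dg where "Dg = Omega (space M) I 2 (Eq 0 1)"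
  have Dg: "Dg \<in> sets (PiM (insert 1 {0::nat}) (\<lambda>_. M))"
    using diag_sets[OF assms(1)] unfolding Dg_def by (simp add: numeral_2_eq_2 lessThan_Suc insert_commute)
  have "emeasure (PiM (insert 1 {0::nat}) (\<lambda>_. M)) Dg = (\<integral>\<^sup>+x. indicator Dg x \<partial>PiM (insert 1 {0::nat}) (\<lambda>_. M))"
    using Dg by simp
  also have "\<dots> = (\<integral>\<^sup>+x. (\<integral>\<^sup>+y. indicator Dg (x(1:=y)) \<partial>M) \<partial>PiM {0::nat} (\<lambda>_. M))"
    using Dg by (intro product_nn_integral_insert) auto
  also have "\<dots> = (\<integral>\<^sup>+x. emeasure M {a} \<partial>PiM {0::nat} (\<lambda>_. M))"
  proof (rule nn_integral_cong)
    fix x assume x: "x \<in> space (PiM {0::nat} (\<lambda>_. M))"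
    then have x0: "x 0 \<in> space M" and xe: "\<And>i. i \<noteq> 0 \<Longrightarrow> x i = undefined"
      by (auto simp: space_PiM PiE_iff extensional_def)
    have "(\<integral>\<^sup>+y. indicator Dg (x(1:=y)) \<partial>M) = (\<integral>\<^sup>+y. indicator {x 0} y \<partial>M)"
    proof (rule nn_integral_cong)
      fix y assume y: "y \<in> space M"
      have "x(1:=y) \<in> Dg \<longleftrightarrow> y = x 0"
        unfolding Dg_def Omega_def using x0 y xe by (auto simp: PiE_iff extensional_def numeral_2_eq_2 less_Suc_eq)
      then show "indicator Dg (x(1:=y)) = (indicator {x 0} y :: ennreal)" by (auto simp: indicator_def)
    qed
    also have "\<dots> = emeasure M {x 0}" using modeling_singleton[OF assms(1) x0] by simp
    also have "\<dots> = emeasure M {a}"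
      using wu_eq[OF assms(2) x0 assms(3)] by (simp add: M.emeasure_eq_measure)
    finally show "(\<integral>\<^sup>+y. indicator Dg (x(1:=y)) \<partial>M) = emeasure M {a}" .
  qed
  also have "\<dots> = emeasure M {a}" by (simp add: P0.emeasure_space_1)
  finally have "emeasure (PiM (insert 1 {0::nat}) (\<lambda>_. M)) Dg = emeasure M {a}" .
  then show ?thesis unfolding stone_def nvars_Eq Dg_def[symmetric]
    by (simp add: measure_def numeral_2_eq_2 lessThan_Suc insert_commute)
qed

lemma rect_measure:
  assumes "modeling ar M I" "a \<in> space M"
  shows "measure (PiM {..<2::nat} (\<lambda>_. M)) (PiE {..<2::nat} (\<lambda>_. {a})) = measure M {a} ^ 2"
    and "PiE {..<2::nat} (\<lambda>_. {a}) \<in> sets (PiM {..<2::nat} (\<lambda>_. M))"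
proof -
  have P: "prob_space M" using assms(1) unfolding modeling_def by auto
  interpret product_sigma_finite "\<lambda>_::nat. M"
    unfolding product_sigma_finite_def using P prob_space_imp_sigma_finite by auto
  have sa: "{a} \<in> sets M" by (rule modeling_singleton[OF assms])
  have "emeasure (PiM {..<2::nat} (\<lambda>_. M)) (PiE {..<2::nat} (\<lambda>_. {a})) = emeasure M {a} ^ 2"
    using sa by (subst emeasure_PiM) (auto simp: numeral_2_eq_2 lessThan_Suc)
  then show "measure (PiM {..<2::nat} (\<lambda>_. M)) (PiE {..<2::nat} (\<lambda>_. {a})) = measure M {a} ^ 2"
    unfolding measure_def by (simp add: power2_eq_square enn2real_mult)
  show "PiE {..<2::nat} (\<lambda>_. {a}) \<in> sets (PiM {..<2::nat} (\<lambda>_. M))"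
    using sa by (intro sets_PiM_I_finite) auto
qed

lemma diag_finite:
  fixes M :: "'a measure"
  assumes "modeling ar M I" "finite (space M)"
  shows "stone (Eq 0 1) M I = (\<Sum>a\<in>space M. measure M {a} ^ 2)"
proof -
  have P: "prob_space M" using assms(1) unfolding modeling_def by auto
  interpret PP: prob_space "PiM {..<2::nat} (\<lambda>_. M)" by (rule prob_space_PiM) (use P in auto)
  define e where "e a = (\<lambda>i::nat. if i < 2 then a else undefined)" for a :: 'a
  have ee: "{e a} = PiE {..<2::nat} (\<lambda>_. {a})" for a
    unfolding e_def by (auto simp: PiE_iff extensional_def)
  have inj: "inj e" unfolding e_def inj_def by (metis zero_less_numeral)
  have Dg: "Omega (space M) I 2 (Eq 0 1) = e ` space M"
  proof (rule set_eqI)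
    fix v
    show "v \<in> Omega (space M) I 2 (Eq 0 1) \<longleftrightarrow> v \<in> e ` space M"
    proof
      assume "v \<in> Omega (space M) I 2 (Eq 0 1)"
      then have v: "v \<in> PiE {..<2::nat} (\<lambda>_. space M)" "v 0 = v 1" unfolding Omega_def by auto
      have "v = e (v 0)" unfolding e_def
      proof
        fix i show "v i = (if i < 2 then v 0 else undefined)"
          using v by (cases "i < 2") (auto simp: PiE_iff extensional_def numeral_2_eq_2 less_Suc_eq)
      qed
      moreover have "v 0 \<in> space M" using v(1) by (simp add: PiE_iff)
      ultimately show "v \<in> e ` space M" by blast
    next
      assume "v \<in> e ` space M"
      then show "v \<in> Omega (space M) I 2 (Eq 0 1)" unfolding Omega_def e_def
        by (auto simp: PiE_iff extensional_def)
    qed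
  qed
  have "stone (Eq 0 1) M I = measure (PiM {..<2::nat} (\<lambda>_. M)) (e ` space M)"
    unfolding stone_def nvars_Eq Dg ..
  also have "\<dots> = (\<Sum>v\<in>e ` space M. measure (PiM {..<2::nat} (\<lambda>_. M)) {v})"
    using assms(2) rect_measure(2)[OF assms(1)] ee
    by (intro measure_eq_sum_singleton) (auto simp: PP.emeasure_eq_measure)
  also have "\<dots> = (\<Sum>a\<in>space M. measure (PiM {..<2::nat} (\<lambda>_. M)) {e a})"
    using inj by (simp add: sum.reindex inj_on_def inj_def)
  also have "\<dots> = (\<Sum>a\<in>space M. measure M {a} ^ 2)"
    using rect_measure(1)[OF assms(1)] ee by (intro sum.cong) auto
  finally show ?thesis .
qed

lemma sq_uniform:
  fixes p :: "'a \<Rightarrow> real"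
  assumes "finite S" "card S = k" "k > 0" "(\<Sum>a\<in>S. p a) = 1" "(\<Sum>a\<in>S. p a ^ 2) = 1 / k"
    "b \<in> S"
  shows "p b = 1 / k"
proof -
  define c where "c = 1 / (real k)"
  have "(\<Sum>a\<in>S. (p a - c) ^ 2) = (\<Sum>a\<in>S. p a ^ 2 - 2 * c * p a + c ^ 2)"
    by (intro sum.cong) (auto simp: power2_eq_square algebra_simps)
  also have "\<dots> = (\<Sum>a\<in>S. p a ^ 2) - 2 * c * (\<Sum>a\<in>S. p a) + real k * c ^ 2"
    using assms(2) by (simp add: sum.distrib sum_subtractf sum_distrib_left)
  also have "\<dots> = 0" using assms(3,4,5) unfolding c_def by (simp add: power2_eq_square field_simps)
  finally have "\<forall>a\<in>S. (p a - c) ^ 2 = 0" using assms(1) by (subst sum_nonneg_eq_0_iff[symmetric]) auto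
  then show ?thesis using assms(6) unfolding c_def by auto
qed

lemma sent_eventually:
  assumes "\<sigma> \<in> X" "fv \<sigma> = {}" "modeling_X_limit ar X A L J"
    "sat (space L) J (\<lambda>_. undefined) \<sigma>"
  shows "eventually (\<lambda>n. sat (space (fst (A n))) (snd (A n)) (\<lambda>_. undefined) \<sigma>) sequentially"
proof -
  have "(\<lambda>n. stone \<sigma> (fst (A n)) (snd (A n))) \<longlonglongrightarrow> stone \<sigma> L J"
    using assms(1,3) unfolding modeling_X_limit_def by auto
  moreover have "stone \<sigma> L J = 1" using assms(4) stone_sentence[OF assms(2), of L J] by simp
  ultimately have "eventually (\<lambda>n. stone \<sigma> (fst (A n)) (snd (A n)) > 1/2) sequentially"
    by (intro order_tendstoD) auto
  then show ?thesis
    by eventually_elim (simp add: stone_sentence[OF assms(2)] split: if_splits)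
qed

theorem lemma8p2:
  fixes ar :: "'r \<Rightarrow> nat"
    and X :: "'r fo set"
    and A :: "nat \<Rightarrow> 'a measure \<times> ('r \<Rightarrow> 'a list set)"
    and L :: "'b measure" and J :: "'r \<Rightarrow> 'b list set"
  assumes "X \<subseteq> FO ar"
    and "FO0 ar \<subseteq> X"
    and "Eq 0 1 \<in> X"
    and "\<forall>n. weakly_uniform (fst (A n))"
    and "modeling_X_limit ar X A L J"
  shows "weakly_uniform L"
proof -
  have modA: "\<And>n. modeling ar (fst (A n)) (snd (A n))" and modL: "modeling ar L J"
    using assms(5) unfolding modeling_X_limit_def by auto
  have conv: "(\<lambda>n. stone (Eq 0 1) (fst (A n)) (snd (A n))) \<longlonglongrightarrow> stone (Eq 0 1) L J"
    using assms(3,5) unfolding modeling_X_limit_def by auto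
  have neA: "\<And>n. space (fst (A n)) \<noteq> {}" and neL: "space L \<noteq> {}"
    using modA modL unfolding modeling_def relational_sample_space_def is_structure_def by auto
  have probA: "\<And>n. prob_space (fst (A n))" and probL: "prob_space L"
    using modA modL unfolding modeling_def by auto
  have AL_X: "AL m \<in> X" for m using assms(2) fv_AL wf_AL unfolding FO0_def by blast
  have EXA_X: "EXA m \<in> X" for m using assms(2) fv_EXA wf_EXA unfolding FO0_def by blast
  show ?thesis
  proof (cases "finite (space L)")
    case False
    have bound: "stone (Eq 0 1) L J \<le> 1 / real (Suc m)" for m
    proof -
      have "sat (space L) J (\<lambda>_. undefined) (AL m)" using False by (simp add: sat_AL atleast_infinite)
      then have ev: "eventually (\<lambda>n. sat (space (fst (A n))) (snd (A n)) (\<lambda>_. undefined) (AL m)) sequentially"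
        by (intro sent_eventually[OF AL_X fv_AL assms(5)])
      have "eventually (\<lambda>n. stone (Eq 0 1) (fst (A n)) (snd (A n)) \<le> 1 / real (Suc m)) sequentially"
        using ev
      proof eventually_elim
        case (elim n)
        obtain a where a: "a \<in> space (fst (A n))" using neA by blast
        have "real (Suc m) * measure (fst (A n)) {a} \<le> 1"
          using elim a modeling_singleton[OF modA] probA assms(4)
          by (intro atoms_atleast) (auto simp: sat_AL)
        then show ?case using diag_wu[OF modA assms(4)[rule_format] a] by (simp add: field_simps)
      qed
      then show ?thesis using conv by (intro tendsto_upperbound) auto
    qed
    have D0: "stone (Eq 0 1) L J \<le> 0"
    proof (rule ccontr)
      assume "\<not> ?thesis"
      then have "0 < stone (Eq 0 1) L J" by simp
      then obtain m where "inverse (real (Suc m)) < stone (Eq 0 1) L J"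
        using reals_Archimedean by blast
      then show False using bound[of m] by (simp add: field_simps)
    qed
    have "measure L {b} = 0" if "b \<in> space L" for b
    proof -
      have "(measure L {b})^2 \<le> 0" using diag_ge[OF modL that] D0 by linarith
      then show ?thesis by simp
    qed
    then show ?thesis unfolding weakly_uniform_def by simp
  next
    case True
    define k where "k = card (space L)"
    have kpos: "k > 0" using True neL unfolding k_def by (simp add: card_gt_0_iff)
    then obtain m where km: "k = Suc m" using gr0_implies_Suc by blast
    have "sat (space L) J (\<lambda>_. undefined) (EXA m)"
      using True km unfolding EXA_def k_def by (simp add: sat_AL atleast_finite)
    then have ev: "eventually (\<lambda>n. sat (space (fst (A n))) (snd (A n)) (\<lambda>_. undefined) (EXA m)) sequentially"
      by (intro sent_eventually[OF EXA_X fv_EXA assms(5)])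
    have "eventually (\<lambda>n. stone (Eq 0 1) (fst (A n)) (snd (A n)) = 1 / real k) sequentially"
      using ev
    proof eventually_elim
      case (elim n)
      have fin: "finite (space (fst (A n)))"
        using elim atleast_infinite unfolding EXA_def by (auto simp: sat_AL)
      then have card: "card (space (fst (A n))) = k"
        using elim km unfolding EXA_def by (auto simp: sat_AL atleast_finite)
      obtain a where a: "a \<in> space (fst (A n))" using neA by blast
      have "real (card (space (fst (A n)))) * measure (fst (A n)) {a} = 1"
        using a modeling_singleton[OF modA] probA assms(4) fin
        by (intro atoms_exact) auto
      then show ?case using diag_wu[OF modA assms(4)[rule_format] a] card kpos by (simp add: field_simps)
    qed
    then have "(\<lambda>n. stone (Eq 0 1) (fst (A n)) (snd (A n))) \<longlonglongrightarrow> 1 / real k"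
      by (rule tendsto_eventually)
    then have D: "stone (Eq 0 1) L J = 1 / real k" using conv LIMSEQ_unique by blast
    have sq: "(\<Sum>a\<in>space L. measure L {a} ^ 2) = 1 / real k" using diag_finite[OF modL True] D by simp
    have s1: "(\<Sum>a\<in>space L. measure L {a}) = 1"
    proof -
      interpret prob_space L by (rule probL)
      have "measure L (space L) = (\<Sum>a\<in>space L. measure L {a})"
        using True modeling_singleton[OF modL] by (intro measure_eq_sum_singleton) auto
      then show ?thesis using prob_space by simp
    qed
    have "measure L {b} = 1 / real k" if "b \<in> space L" for b
      using sq_uniform[OF True k_def[symmetric] kpos s1 sq that] .
    then show ?thesis unfolding weakly_uniform_def by simp
  qed
qed

end
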